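(* Let $D$ be a database and $\Omega$ a partition of $D$ into $|\Omega|$ pairwise disjoint sub-databases, and let $\mathcal F=\{A_1,\ldots,A_Q\}$ be a set of $Q$ queries, each a subset of $\Omega$. Fix $\varepsilon>0$. The benchmark algorithm answers each query $A\in\mathcal F$ independently by $\hat N_1(A)=N(A)+\zeta_A$ with $\zeta_A\sim\mathrm{Lap}(1/\varepsilon)$, consuming total privacy budget $Q\varepsilon$. The sigma-counting algorithm uses $\varepsilon'=\varepsilon Q/|\Omega|$ (so that its total privacy budget $|\Omega|\varepsilon'$ equals $Q\varepsilon$): independently for each $\omega\in\Omega$ it sets $\hat N_2(\omega)=\max(N(\omega)+\zeta_\omega,0)$ with $\zeta_\omega\sim\mathrm{Lap}(1/\varepsilon')$, and answers $A\in\mathcal F$ by $\hat N_2(A)=\sum_{\omega\in A}\hat N_2(\omega)$. If $Q>|\Omega|^{3/2}$, then the utility of the sigma-counting algorithm on $\mathcal F$ is strictly larger than that of the benchmark algorithm on $\mathcal F$.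
   Context: $N(A)$ denotes the true number of rows in the sub-database $\bigcup_{\omega\in A}\omega$. $\mathrm{Lap}(\lambda)$ is the Laplace distribution with density $(2\lambda)^{-1}e^{-|x|/\lambda}$. The privacy budget of an algorithm is its total differential-privacy parameter computed by sequential composition (a Laplace mechanism with noise $\mathrm{Lap}(1/\varepsilon)$ on a count has parameter $\varepsilon$, and parameters add over mechanisms). The utility of an algorithm producing responses $\hat N(A)$ on a finite set of queries $\mathcal F$ is $\mathcal U=\frac{1}{\mathrm{card}(\mathcal F)}\sum_{A\in\mathcal F}\frac{2}{\mathrm{Var}(\hat N(A)\mid N(A))}$. *)

theory Defs
  imports "HOL-Probability.Probability" "HOL-Library.Disjoint_Sets"
begin

definition N :: "'r set set \<Rightarrow> nat" where
  "N A = card (\<Union>A)"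

definition laplace_density :: "real \<Rightarrow> real \<Rightarrow> real" where
  "laplace_density b x = exp (- \<bar>x\<bar> / b) / (2 * b)"

definition laplace :: "real \<Rightarrow> real measure" where
  "laplace b = density lborel (\<lambda>x. ennreal (laplace_density b x))"

definition var :: "'a measure \<Rightarrow> ('a \<Rightarrow> real) \<Rightarrow> real" where
  "var M X = (\<integral>x. (X x - (\<integral>y. X y \<partial>M))\<^sup>2 \<partial>M)"

text \<open>Utility, valued in ennreal so that 2/0 = \<infinity> (zero-variance responses).\<close>
definition utility :: "'a measure \<Rightarrow> 'q set \<Rightarrow> ('q \<Rightarrow> 'a \<Rightarrow> real) \<Rightarrow> ennreal" where
  "utility M F Nhat = (\<Sum>A\<in>F. ennreal 2 / ennreal (var M (Nhat A))) / of_nat (card F)"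

definition benchmark_noise :: "real \<Rightarrow> 'r set set set \<Rightarrow> ('r set set \<Rightarrow> real) measure" where
  "benchmark_noise eps F = PiM F (\<lambda>_. laplace (1 / eps))"

definition benchmark_answer :: "'r set set \<Rightarrow> ('r set set \<Rightarrow> real) \<Rightarrow> real" where
  "benchmark_answer A z = real (N A) + z A"

definition sigma_noise :: "real \<Rightarrow> 'r set set \<Rightarrow> ('r set \<Rightarrow> real) measure" where
  "sigma_noise eps' \<Omega> = PiM \<Omega> (\<lambda>_. laplace (1 / eps'))"

definition sigma_answer :: "'r set set \<Rightarrow> ('r set \<Rightarrow> real) \<Rightarrow> real" where
  "sigma_answer A z = (\<Sum>\<omega>\<in>A. max (real (N {\<omega>}) + z \<omega>) 0)"

end

theory Submission
  imports Defs
begin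

lemma lap_measurable[measurable]: "laplace_density b \<in> borel_measurable borel"
  unfolding laplace_density_def by measurable

lemma lap_nonneg: "b > 0 \<Longrightarrow> 0 \<le> laplace_density b x"
  unfolding laplace_density_def by simp

lemma lap_half:
  assumes b: "b > 0"
  shows "(\<integral>\<^sup>+x. ennreal (laplace_density b x * \<bar>x\<bar>^i) * indicator {0..} x \<partial>lborel) = ennreal (fact i * b^i / 2)"
proof -
  have "(\<integral>\<^sup>+x. ennreal (laplace_density b x * \<bar>x\<bar>^i) * indicator {0..} x \<partial>lborel)
      = (\<integral>\<^sup>+x. ennreal (1/2) * ennreal (erlang_density 0 (1/b) x * x ^ i) \<partial>lborel)"
  proof (intro nn_integral_cong)
    fix x
    show "ennreal (laplace_density b x * \<bar>x\<bar>^i) * indicator {0..} x = ennreal (1/2) * ennreal (erlang_density 0 (1/b) x * x ^ i)"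
    proof (cases "x < 0")
      case False
      then have e: "laplace_density b x * \<bar>x\<bar>^i = (1/2) * (erlang_density 0 (1/b) x * x ^ i)"
        using b by (simp add: laplace_density_def erlang_density_def field_simps)
      have m: "ennreal ((1/2) * (erlang_density 0 (1/b) x * x ^ i)) = ennreal (1/2) * ennreal (erlang_density 0 (1/b) x * x ^ i)"
        by (rule ennreal_mult) (use False b in \<open>auto simp: erlang_density_def\<close>)
      have "indicator {0..} x = (1::ennreal)" using False by simp
      then show ?thesis by (simp only: e m mult_1_right)
    qed (simp add: erlang_density_def)
  qed
  also have "\<dots> = ennreal (1/2) * (\<integral>\<^sup>+x. ennreal (erlang_density 0 (1/b) x * x ^ i) \<partial>lborel)"
    by (intro nn_integral_cmult) (auto simp: erlang_density_def)
  also have "\<dots> = ennreal (fact i * b^i / 2)"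
    using b by (subst nn_integral_erlang_ith_moment) (auto simp: power_one_over ennreal_divide_numeral[symmetric] divide_ennreal_def mult.commute)
  finally show ?thesis .
qed

lemma lap_nn:
  assumes b: "b > 0"
  shows "(\<integral>\<^sup>+x. ennreal (laplace_density b x * \<bar>x\<bar>^i) \<partial>lborel) = ennreal (fact i * b^i)"
proof -
  let ?f = "\<lambda>x. ennreal (laplace_density b x * \<bar>x\<bar>^i)"
  have sym0: "laplace_density b (-x) = laplace_density b x" for x by (simp add: laplace_density_def)
  have sym: "?f (-x) = ?f x" for x by (simp add: sym0)
  have "(\<integral>\<^sup>+x. ?f x \<partial>lborel) = (\<integral>\<^sup>+x. ?f x * indicator {0..} x + ?f x * indicator {..<0} x \<partial>lborel)"
    by (intro nn_integral_cong) (auto split: split_indicator)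
  also have "\<dots> = (\<integral>\<^sup>+x. ?f x * indicator {0..} x \<partial>lborel) + (\<integral>\<^sup>+x. ?f x * indicator {..<0} x \<partial>lborel)"
    by (intro nn_integral_add) auto
  also have "(\<integral>\<^sup>+x. ?f x * indicator {..<0} x \<partial>lborel) = (\<integral>\<^sup>+x. ?f (0 + (-1) * x) * indicator {..<0} (0 + (-1) * x) \<partial>lborel)"
    by (subst nn_integral_real_affine[where c="-1" and t=0]) auto
  also have "\<dots> = (\<integral>\<^sup>+x. ?f x * indicator {0..} x \<partial>lborel)"
    apply (intro nn_integral_cong_AE)
    using AE_lborel_singleton[of 0] apply eventually_elim
    by (auto simp: sym sym0 split: split_indicator)
  finally show ?thesis using b
    by (simp add: lap_half ennreal_plus[symmetric] del: ennreal_plus)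
qed

lemma lap_prob: assumes b: "b > 0" shows "prob_space (laplace b)"
proof
  have "emeasure (laplace b) (space (laplace b)) = (\<integral>\<^sup>+x. ennreal (laplace_density b x * \<bar>x\<bar>^0) \<partial>lborel)"
    unfolding laplace_def by (simp add: emeasure_density)
  also have "\<dots> = 1" using lap_nn[OF b, of 0] by simp
  finally show "emeasure (laplace b) (space (laplace b)) = 1" .
qed

lemma lap_sets[simp]: "sets (laplace b) = sets borel" and lap_space[simp]: "space (laplace b) = UNIV"
  unfolding laplace_def by auto

lemma lap_integrable_iff:
  assumes b: "b > 0" and [measurable]: "f \<in> borel_measurable borel"
  shows "integrable (laplace b) f \<longleftrightarrow> integrable lborel (\<lambda>x. laplace_density b x * f x)"
  unfolding laplace_def using b by (subst integrable_density) (auto simp: lap_nonneg)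

lemma lap_integral:
  assumes b: "b > 0" and [measurable]: "f \<in> borel_measurable borel"
  shows "integral\<^sup>L (laplace b) f = (\<integral>x. laplace_density b x * f x \<partial>lborel)"
  unfolding laplace_def using b by (subst integral_density) (auto simp: lap_nonneg)

lemma lap_sq: assumes b: "b > 0"
  shows "integrable (laplace b) (\<lambda>x. x^2)" "integral\<^sup>L (laplace b) (\<lambda>x. x^2) = 2 * b^2"
proof -
  have "has_bochner_integral lborel (\<lambda>x. laplace_density b x * x^2) (2 * b^2)"
  proof (rule has_bochner_integral_nn_integral)
    show "(\<integral>\<^sup>+x. ennreal (laplace_density b x * x^2) \<partial>lborel) = ennreal (2 * b^2)"
      using lap_nn[OF b, of 2] by simp
  qed (use b in \<open>auto simp: lap_nonneg\<close>)
  then have h: "integrable lborel (\<lambda>x. laplace_density b x * x^2)" "(\<integral>x. laplace_density b x * x^2 \<partial>lborel) = 2*b^2"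
    by (auto simp: has_bochner_integral_iff)
  show "integrable (laplace b) (\<lambda>x. x^2)"
    using b h by (simp add: lap_integrable_iff)
  show "integral\<^sup>L (laplace b) (\<lambda>x. x^2) = 2 * b^2"
    using b h by (simp add: lap_integral)
qed

lemma lap_lin: assumes b: "b > 0"
  shows "integrable (laplace b) (\<lambda>x. x)" "integral\<^sup>L (laplace b) (\<lambda>x. x) = 0"
proof -
  have sym0: "laplace_density b (-x) = laplace_density b x" for x by (simp add: laplace_density_def)
  have i: "integrable lborel (\<lambda>x. laplace_density b x * x)"
    unfolding integrable_iff_bounded
  proof
    have "(\<integral>\<^sup>+x. ennreal (norm (laplace_density b x * x)) \<partial>lborel) = (\<integral>\<^sup>+x. ennreal (laplace_density b x * \<bar>x\<bar>^1) \<partial>lborel)"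
      using b by (intro nn_integral_cong) (simp add: abs_mult lap_nonneg)
    also have "\<dots> < \<infinity>" using lap_nn[OF b, of 1] by simp
    finally show "(\<integral>\<^sup>+x. ennreal (norm (laplace_density b x * x)) \<partial>lborel) < \<infinity>" .
  qed simp
  then show "integrable (laplace b) (\<lambda>x. x)" using b by (simp add: lap_integrable_iff)
  have "(\<integral>x. laplace_density b x * x \<partial>lborel) = \<bar>-1::real\<bar> *\<^sub>R (\<integral>x. laplace_density b (0 + (-1) * x) * (0 + (-1) * x) \<partial>lborel)"
    by (rule lborel_integral_real_affine) simp
  also have "\<dots> = - (\<integral>x. laplace_density b x * x \<partial>lborel)"
    by (simp add: sym0)
  finally have "(\<integral>x. laplace_density b x * x \<partial>lborel) = 0" by simp
  then show "integral\<^sup>L (laplace b) (\<lambda>x. x) = 0" using b by (simp add: lap_integral)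
qed

lemma pi_one:
  fixes u :: "real \<Rightarrow> real"
  assumes L: "prob_space L" and I: "finite I" "i \<in> I" and u: "integrable L u"
  shows "integrable (PiM I (\<lambda>_. L)) (\<lambda>z. u (z i))" "(\<integral>z. u (z i) \<partial>PiM I (\<lambda>_. L)) = integral\<^sup>L L u"
proof -
  interpret L: prob_space L by fact
  interpret P: product_sigma_finite "\<lambda>_. L" by unfold_locales
  let ?h = "\<lambda>j. if j = i then u else (\<lambda>_. 1)"
  have c1: "integral\<^sup>L L (\<lambda>_. 1::real) = 1" by (simp add: L.prob_space)
  have e: "(\<Prod>j\<in>I. ?h j (z j)) = u (z i)" for z
    using I by (simp add: if_distrib[of "\<lambda>f. f (z _)"] prod.delta)
  have "integrable (PiM I (\<lambda>_. L)) (\<lambda>z. \<Prod>j\<in>I. ?h j (z j))"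
    by (rule P.product_integrable_prod) (use I u in auto)
  then show "integrable (PiM I (\<lambda>_. L)) (\<lambda>z. u (z i))" by (simp only: e)
  have "(\<integral>z. (\<Prod>j\<in>I. ?h j (z j)) \<partial>PiM I (\<lambda>_. L)) = (\<Prod>j\<in>I. integral\<^sup>L L (?h j))"
    by (rule P.product_integral_prod) (use I u in auto)
  also have "\<dots> = (\<Prod>j\<in>I. if j = i then integral\<^sup>L L u else 1)"
    by (rule prod.cong) (auto simp: L.prob_space)
  also have "\<dots> = integral\<^sup>L L u"
    using I by (simp add: prod.delta)
  finally show "(\<integral>z. u (z i) \<partial>PiM I (\<lambda>_. L)) = integral\<^sup>L L u" by (simp only: e)
qed

lemma pi_two:
  fixes u v :: "real \<Rightarrow> real"
  assumes L: "prob_space L" and I: "finite I" "i \<in> I" "j \<in> I" "i \<noteq> j" and u: "integrable L u" and v: "integrable L v"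
  shows "integrable (PiM I (\<lambda>_. L)) (\<lambda>z. u (z i) * v (z j))" "(\<integral>z. u (z i) * v (z j) \<partial>PiM I (\<lambda>_. L)) = integral\<^sup>L L u * integral\<^sup>L L v"
proof -
  interpret L: prob_space L by fact
  interpret P: product_sigma_finite "\<lambda>_. L" by unfold_locales
  let ?h = "\<lambda>k. if k = i then u else if k = j then v else (\<lambda>_. 1)"
  have pe: "(\<Prod>k\<in>I. g k) = g i * g j" if "\<And>k. k \<in> I \<Longrightarrow> k \<noteq> i \<Longrightarrow> k \<noteq> j \<Longrightarrow> g k = 1" for g :: "_ \<Rightarrow> real"
  proof -
    have "(\<Prod>k\<in>I. g k) = g i * (\<Prod>k\<in>I - {i}. g k)" using I by (simp add: prod.remove)
    also have "(\<Prod>k\<in>I - {i}. g k) = g j * (\<Prod>k\<in>I - {i} - {j}. g k)" using I by (simp add: prod.remove)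
    also have "(\<Prod>k\<in>I - {i} - {j}. g k) = 1" using that by (intro prod.neutral) auto
    finally show ?thesis by simp
  qed
  have e: "(\<Prod>k\<in>I. ?h k (z k)) = u (z i) * v (z j)" for z
    using I by (subst pe) auto
  have "integrable (PiM I (\<lambda>_. L)) (\<lambda>z. \<Prod>k\<in>I. ?h k (z k))"
    by (rule P.product_integrable_prod) (use I u v in auto)
  then show "integrable (PiM I (\<lambda>_. L)) (\<lambda>z. u (z i) * v (z j))" by (simp only: e)
  have "(\<integral>z. (\<Prod>k\<in>I. ?h k (z k)) \<partial>PiM I (\<lambda>_. L)) = (\<Prod>k\<in>I. integral\<^sup>L L (?h k))"
    by (rule P.product_integral_prod) (use I u v in auto)
  also have "\<dots> = integral\<^sup>L L u * integral\<^sup>L L v"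
    using I by (subst pe) (auto simp: L.prob_space)
  finally show "(\<integral>z. u (z i) * v (z j) \<partial>PiM I (\<lambda>_. L)) = integral\<^sup>L L u * integral\<^sup>L L v" by (simp only: e)
qed

lemma var_sum:
  fixes f :: "'i \<Rightarrow> real \<Rightarrow> real"
  assumes L: "prob_space L" and I: "finite I" "A \<subseteq> I"
    and int1: "\<And>i. i \<in> A \<Longrightarrow> integrable L (f i)"
    and int2: "\<And>i. i \<in> A \<Longrightarrow> integrable L (\<lambda>t. (f i t)^2)"
  shows "var (PiM I (\<lambda>_. L)) (\<lambda>z. \<Sum>i\<in>A. f i (z i)) = (\<Sum>i\<in>A. var L (f i))"
proof -
  interpret L: prob_space L by fact
  let ?P = "PiM I (\<lambda>_. L)"
  define m where "m i = integral\<^sup>L L (f i)" for i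
  define g where "g i t = f i t - m i" for i t
  have A: "finite A" using I finite_subset by blast
  have gi: "integrable L (g i)" if "i \<in> A" for i
    unfolding g_def using int1[OF that] by auto
  have gi0: "integral\<^sup>L L (g i) = 0" if "i \<in> A" for i
    unfolding g_def m_def using int1[OF that] by (simp add: L.prob_space)
  have gsq: "(g i t)^2 = (f i t)^2 - 2 * m i * f i t + (m i)^2" for i t
    unfolding g_def by (simp add: power2_eq_square algebra_simps)
  have gi2: "integrable L (\<lambda>t. (g i t)^2)" if "i \<in> A" for i
    unfolding gsq using int1[OF that] int2[OF that] by auto
  have vi: "var L (f i) = integral\<^sup>L L (\<lambda>t. (g i t)^2)" for i
    unfolding var_def g_def m_def ..
  have fint: "integrable ?P (\<lambda>z. f i (z i))" "(\<integral>z. f i (z i) \<partial>?P) = m i" if "i \<in> A" for i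
    using pi_one[OF L I(1) _ int1[OF that]] that I(2) unfolding m_def by auto
  have mean: "(\<integral>z. (\<Sum>i\<in>A. f i (z i)) \<partial>?P) = (\<Sum>i\<in>A. m i)"
    by (rule trans[OF Bochner_Integration.integral_sum[where f="\<lambda>i z. f i (z i)"]]) (use fint in auto)
  have trm: "integrable ?P (\<lambda>z. g i (z i) * g j (z j)) \<and> (\<integral>z. g i (z i) * g j (z j) \<partial>?P) = (if i = j then var L (f i) else 0)"
    if "i \<in> A" "j \<in> A" for i j
  proof (cases "i = j")
    case True
    have e: "(\<lambda>z. g i (z i) * g j (z j)) = (\<lambda>z. (\<lambda>t. (g i t)^2) (z i))"
      using True by (simp add: power2_eq_square)
    show ?thesis unfolding e using pi_one[OF L I(1) _ gi2[OF that(1)]] that I(2) True vi by auto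
  next
    case False
    show ?thesis using pi_two[OF L I(1) _ _ False gi[OF that(1)] gi[OF that(2)]] that I(2) False gi0 by auto
  qed
  have "var ?P (\<lambda>z. \<Sum>i\<in>A. f i (z i)) = (\<integral>z. (\<Sum>i\<in>A. f i (z i) - m i)^2 \<partial>?P)"
    unfolding var_def mean by (simp add: sum_subtractf)
  also have "\<dots> = (\<integral>z. (\<Sum>i\<in>A. \<Sum>j\<in>A. g i (z i) * g j (z j)) \<partial>?P)"
    unfolding g_def by (simp add: power2_eq_square sum_product)
  also have "\<dots> = (\<Sum>i\<in>A. \<Sum>j\<in>A. (\<integral>z. g i (z i) * g j (z j) \<partial>?P))"
    using trm by (simp add: Bochner_Integration.integral_sum)
  also have "\<dots> = (\<Sum>i\<in>A. \<Sum>j\<in>A. (if i = j then var L (f i) else 0))"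
    using trm by (intro sum.cong refl) auto
  also have "\<dots> = (\<Sum>i\<in>A. var L (f i))"
    using A by simp
  finally show ?thesis .
qed

lemma var_le:
  fixes f :: "real \<Rightarrow> real"
  assumes L: "prob_space L" and f: "integrable L f" and f2: "integrable L (\<lambda>t. (f t)^2)"
  shows "var L f \<le> integral\<^sup>L L (\<lambda>t. (f t - c)^2)"
proof -
  interpret L: prob_space L by fact
  define m where "m = integral\<^sup>L L f"
  have e1: "(\<lambda>t. (f t - c)^2) = (\<lambda>t. (f t)^2 - 2 * c * f t + c^2)"
    by (auto simp: power2_eq_square algebra_simps)
  have e2: "(\<lambda>t. (f t - m)^2) = (\<lambda>t. (f t)^2 - 2 * m * f t + m^2)"
    by (auto simp: power2_eq_square algebra_simps)
  have i1: "integral\<^sup>L L (\<lambda>t. (f t - c)^2) = integral\<^sup>L L (\<lambda>t. (f t)^2) - 2 * c * m + c^2"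
    unfolding e1 m_def using f f2 by (simp add: L.prob_space)
  have i2: "var L f = integral\<^sup>L L (\<lambda>t. (f t)^2) - 2 * m * m + m^2"
    unfolding var_def m_def[symmetric] e2 using f f2 by (simp add: L.prob_space m_def)
  have "0 \<le> (m - c)^2" by simp
  then show ?thesis unfolding i1 i2 by (simp add: power2_eq_square algebra_simps)
qed

lemma clip_int:
  assumes b: "b > 0"
  shows "integrable (laplace b) (\<lambda>t. max (n + t) 0)" "integrable (laplace b) (\<lambda>t. (max (n + t) 0)^2)"
proof -
  interpret L: prob_space "laplace b" by (rule lap_prob[OF b])
  have ia: "integrable (laplace b) (\<lambda>t. \<bar>n\<bar> + \<bar>t\<bar>)" using lap_lin[OF b] by auto
  show "integrable (laplace b) (\<lambda>t. max (n + t) 0)"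
    by (rule Bochner_Integration.integrable_bound[OF ia]) (auto simp: laplace_def)
  have ib: "integrable (laplace b) (\<lambda>t. n^2 + 2 * \<bar>n\<bar> * \<bar>t\<bar> + t^2)" using lap_lin[OF b] lap_sq[OF b] by auto
  show "integrable (laplace b) (\<lambda>t. (max (n + t) 0)^2)"
  proof (rule Bochner_Integration.integrable_bound[OF ib])
    show "AE x in laplace b. norm ((max (n + x) 0)\<^sup>2) \<le> norm (n\<^sup>2 + 2 * \<bar>n\<bar> * \<bar>x\<bar> + x\<^sup>2)"
    proof (rule AE_I2)
      fix x
      have "(max (n + x) 0)^2 \<le> (\<bar>n\<bar> + \<bar>x\<bar>)^2"
        by (rule power_mono) auto
      also have "\<dots> = n\<^sup>2 + 2 * \<bar>n\<bar> * \<bar>x\<bar> + x\<^sup>2" by (simp add: power2_eq_square algebra_simps)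
      finally show "norm ((max (n + x) 0)\<^sup>2) \<le> norm (n\<^sup>2 + 2 * \<bar>n\<bar> * \<bar>x\<bar> + x\<^sup>2)" by simp
    qed
  qed (auto simp: laplace_def)
qed

lemma clip_var:
  assumes b: "b > 0" and n: "n \<ge> 0"
  shows "var (laplace b) (\<lambda>t. max (n + t) 0) \<le> 2 * b^2"
proof -
  interpret L: prob_space "laplace b" by (rule lap_prob[OF b])
  have "var (laplace b) (\<lambda>t. max (n + t) 0) \<le> integral\<^sup>L (laplace b) (\<lambda>t. (max (n + t) 0 - n)^2)"
    by (rule var_le[OF lap_prob[OF b] clip_int[OF b]])
  also have "\<dots> \<le> integral\<^sup>L (laplace b) (\<lambda>t. t^2)"
  proof (rule integral_mono)
    have "(\<lambda>t. (max (n + t) 0 - n)^2) = (\<lambda>t. (max (n + t) 0)^2 - 2 * n * max (n + t) 0 + n^2)"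
      by (auto simp: power2_eq_square algebra_simps)
    then show "integrable (laplace b) (\<lambda>t. (max (n + t) 0 - n)^2)"
      using clip_int[OF b, of n] by simp
    show "integrable (laplace b) (\<lambda>t. t^2)" by (rule lap_sq[OF b])
    fix t :: real
    have "\<bar>max (n + t) 0 - n\<bar> \<le> \<bar>t\<bar>" using n by auto
    then show "(max (n + t) 0 - n)^2 \<le> t^2"
      by (metis abs_ge_zero power2_abs power_mono)
  qed
  also have "\<dots> = 2 * b^2" by (rule lap_sq[OF b])
  finally show ?thesis .
qed

lemma shift_var:
  assumes b: "b > 0"
  shows "var (laplace b) (\<lambda>t. c + t) = 2 * b^2" "integrable (laplace b) (\<lambda>t. c + t)"
    "integrable (laplace b) (\<lambda>t. (c + t)^2)"
proof -
  interpret L: prob_space "laplace b" by (rule lap_prob[OF b])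
  have m: "integral\<^sup>L (laplace b) (\<lambda>t. c + t) = c"
    using lap_lin[OF b] L.prob_space by simp
  show "var (laplace b) (\<lambda>t. c + t) = 2 * b^2"
    unfolding var_def m using lap_sq[OF b] by simp
  show "integrable (laplace b) (\<lambda>t. c + t)" using lap_lin[OF b] by simp
  have "(\<lambda>t. (c + t)^2) = (\<lambda>t. c^2 + 2 * c * t + t^2)" by (auto simp: power2_eq_square algebra_simps)
  then show "integrable (laplace b) (\<lambda>t. (c + t)^2)" using lap_lin[OF b] lap_sq[OF b] by simp
qed

lemma var_nonneg: "0 \<le> var M X"
  unfolding var_def by (rule Bochner_Integration.integral_nonneg) simp

lemma ediv_bound:
  assumes "0 \<le> v" "v \<le> V" "0 < V"
  shows "ennreal (2 / V) \<le> ennreal 2 / ennreal v"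
proof (cases "v = 0")
  case True then show ?thesis by simp
next
  case False
  then have "0 < v" using assms by simp
  then have "ennreal 2 / ennreal v = ennreal (2 / v)" by (rule divide_ennreal[rotated]) simp
  moreover have "2 / V \<le> 2 / v" using assms \<open>0 < v\<close> by (intro divide_left_mono) auto
  ultimately show ?thesis by (simp add: ennreal_leI)
qed

theorem theorem2:
  fixes D :: "'r set" and \<Omega> :: "'r set set" and F :: "'r set set set" and \<epsilon> :: real
  assumes "finite D"
    and "partition_on D \<Omega>"
    and "F \<subseteq> Pow \<Omega>"
    and "\<epsilon> > 0"
    and "real (card F) > real (card \<Omega>) powr (3/2)"
  shows "utility (sigma_noise (\<epsilon> * real (card F) / real (card \<Omega>)) \<Omega>) F sigma_answer
         > utility (benchmark_noise \<epsilon> F) F benchmark_answer"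
proof -
  note eps = assms(4)
  define Q where "Q = card F"
  define K where "K = card \<Omega>"
  have Qpos: "Q > 0" using assms(5) unfolding Q_def
    by (metis of_nat_0_less_iff order.strict_trans1 powr_ge_zero)
  then have finF: "finite F" and Fne: "F \<noteq> {}" unfolding Q_def using card_gt_0_iff by blast+
  have finO: "finite \<Omega>"
  proof (rule finite_subset[of _ "Pow D"])
    show "\<Omega> \<subseteq> Pow D" using assms(2) unfolding partition_on_def by auto
  qed (use assms(1) in simp)
  have bprob: "prob_space (laplace (1/\<epsilon>))" using eps by (intro lap_prob) simp
  have bterm: "ennreal 2 / ennreal (var (benchmark_noise \<epsilon> F) (benchmark_answer A)) = ennreal (\<epsilon>^2)"
    if A: "A \<in> F" for A
  proof -
    have e: "benchmark_answer A = (\<lambda>z. \<Sum>i\<in>{A}. (\<lambda>t. real (N i) + t) (z i))"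
      by (auto simp: benchmark_answer_def fun_eq_iff)
    have "var (benchmark_noise \<epsilon> F) (benchmark_answer A) = (\<Sum>i\<in>{A}. var (laplace (1/\<epsilon>)) (\<lambda>t. real (N i) + t))"
      unfolding e benchmark_noise_def
      by (rule var_sum[OF bprob finF]) (use A shift_var[of "1/\<epsilon>"] eps in auto)
    also have "\<dots> = 2 * (1/\<epsilon>)^2" using shift_var[of "1/\<epsilon>"] eps by simp
    finally have v: "var (benchmark_noise \<epsilon> F) (benchmark_answer A) = 2 * (1/\<epsilon>)^2" .
    have "ennreal 2 / ennreal (2 * (1/\<epsilon>)^2) = ennreal (2 / (2 * (1/\<epsilon>)^2))"
      by (rule divide_ennreal) (use eps in auto)
    also have "2 / (2 * (1/\<epsilon>)^2) = \<epsilon>^2" using eps by (simp add: power_one_over)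
    finally show ?thesis unfolding v .
  qed
  have ub: "utility (benchmark_noise \<epsilon> F) F benchmark_answer = ennreal (\<epsilon>^2)"
  proof -
    have "utility (benchmark_noise \<epsilon> F) F benchmark_answer = (\<Sum>A\<in>F. ennreal (\<epsilon>^2)) / of_nat Q"
      unfolding utility_def Q_def using bterm by simp
    also have "\<dots> = ennreal (\<epsilon>^2) * of_nat Q / of_nat Q" by (simp add: Q_def mult.commute)
    also have "\<dots> = ennreal (\<epsilon>^2)" using Qpos by (intro ennreal_mult_divide_eq) auto
    finally show ?thesis .
  qed
  define c where "c = (if K = 0 then \<epsilon>^2 + 1 else \<epsilon>^2 * real Q^2 / real K^3)"
  have cgt: "c > \<epsilon>^2"
  proof (cases "K = 0")
    case False
    have "real K powr (3/2) \<ge> 0" by simp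
    then have "(real K powr (3/2))^2 < real Q^2" using assms(5) unfolding Q_def K_def
      by (intro power_strict_mono) auto
    moreover have "(real K powr (3/2))^2 = real K^3"
    proof -
      have "(real K powr (3/2))^2 = real K powr (3/2) * real K powr (3/2)" by (simp only: power2_eq_square)
      also have "\<dots> = real K powr (3/2 + 3/2)" by (simp only: powr_add)
      also have "\<dots> = real K powr 3" by simp
      also have "\<dots> = real K ^ 3" using False by (simp add: powr_numeral)
      finally show ?thesis .
    qed
    ultimately have "real K^3 < real Q^2" by simp
    then have "1 < real Q^2 / real K^3" using False by simp
    then have "\<epsilon>^2 * 1 < \<epsilon>^2 * (real Q^2 / real K^3)" using eps by (intro mult_strict_left_mono) auto
    then show ?thesis using False unfolding c_def by simp
  qed (simp add: c_def)
  define e' where "e' = \<epsilon> * real (card F) / real (card \<Omega>)"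
  have sterm: "ennreal c \<le> ennreal 2 / ennreal (var (sigma_noise e' \<Omega>) (sigma_answer A))"
    if A: "A \<in> F" for A
  proof (cases "A = {}")
    case True
    then have "var (sigma_noise e' \<Omega>) (sigma_answer A) = 0"
      by (simp add: var_def sigma_answer_def)
    then show ?thesis by simp
  next
    case False
    have AO: "A \<subseteq> \<Omega>" using A assms(3) by auto
    then have Kpos: "K > 0" using False finO unfolding K_def by (metis card_gt_0_iff subset_empty)
    have e'pos: "e' > 0" using eps Kpos Qpos unfolding e'_def Q_def K_def by simp
    have b'pos: "1/e' > 0" using e'pos by simp
    have sprob: "prob_space (laplace (1/e'))" using b'pos by (rule lap_prob)
    have e: "sigma_answer A = (\<lambda>z. \<Sum>\<omega>\<in>A. (\<lambda>t. max (real (N {\<omega>}) + t) 0) (z \<omega>))"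
      by (simp add: sigma_answer_def fun_eq_iff)
    have "var (sigma_noise e' \<Omega>) (sigma_answer A) = (\<Sum>\<omega>\<in>A. var (laplace (1/e')) (\<lambda>t. max (real (N {\<omega>}) + t) 0))"
      unfolding e sigma_noise_def
      by (rule var_sum[OF sprob finO AO]) (use clip_int[OF b'pos] in auto)
    also have "\<dots> \<le> (\<Sum>\<omega>\<in>A. 2 * (1/e')^2)"
      by (intro sum_mono clip_var[OF b'pos]) simp
    also have "\<dots> = real (card A) * (2 * (1/e')^2)" by simp
    also have "\<dots> \<le> real K * (2 * (1/e')^2)"
      using card_mono[OF finO AO] unfolding K_def by (intro mult_right_mono) auto
    finally have vle: "var (sigma_noise e' \<Omega>) (sigma_answer A) \<le> real K * (2 * (1/e')^2)" .
    have "ennreal (2 / (real K * (2 * (1/e')^2))) \<le> ennreal 2 / ennreal (var (sigma_noise e' \<Omega>) (sigma_answer A))"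
      by (rule ediv_bound[OF var_nonneg vle]) (use Kpos e'pos in simp)
    moreover have "2 / (real K * (2 * (1/e')^2)) = c"
      using Kpos eps unfolding c_def e'_def Q_def K_def by (simp add: field_simps power2_eq_square power3_eq_cube)
    ultimately show ?thesis by simp
  qed
  have "ennreal (\<epsilon>^2) < ennreal c" using cgt eps by (subst ennreal_less_iff) auto
  also have "ennreal c = (\<Sum>A\<in>F. ennreal c) / of_nat Q"
  proof -
    have "(\<Sum>A\<in>F. ennreal c) / of_nat Q = ennreal c * of_nat Q / of_nat Q" by (simp add: Q_def mult.commute)
    also have "\<dots> = ennreal c" using Qpos by (intro ennreal_mult_divide_eq) auto
    finally show ?thesis by simp
  qed
  also have "\<dots> \<le> utility (sigma_noise e' \<Omega>) F sigma_answer"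
    unfolding utility_def Q_def
    by (intro divide_right_mono_ennreal sum_mono sterm)
  finally show ?thesis using ub unfolding e'_def by simp
qed

end
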